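(* Let $\mathbf{u}=(u_n)$ be an a-sequence. Then $\{x\in\mathbb{T}: \mathrm{supp}_\mathbf{u}(x)\text{ is finite}\}=t(s_\mathbf{u}(\mathbb{T}))$, the torsion subgroup of $s_\mathbf{u}(\mathbb{T})$.
   Context: An a-sequence is a strictly increasing sequence of integers $\mathbf{u}=(u_n)_{n\in\mathbb{N}}$ with $u_n\mid u_{n+1}$ for all $n$; ratios $q_0=u_0$, $q_n=u_n/u_{n-1}$. $\mathbb{T}=\mathbb{R}/\mathbb{Z}$, and each $x\in\mathbb{T}$ is identified with its representative in $[0,1)$. $s_\mathbf{u}(\mathbb{T})=\{x\in\mathbb{T}: u_nx\to0\text{ in }\mathbb{T}\}$. Canonical representation: for $x\in[0,1)$ there is a unique integer sequence $(c_n)_{n\ge1}$ with $0\le c_n<q_n$ for all $n$, $c_n<q_n-1$ for infinitely many $n$, and $x=\sum_{n\ge1}c_n/u_n$. Then $\mathrm{supp}_\mathbf{u}(x)=\{n: c_n\ne0\}$. *)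

theory Defs
  imports "HOL-Analysis.Analysis"
begin

definition a_sequence :: "(nat \<Rightarrow> int) \<Rightarrow> bool" where
  "a_sequence u \<longleftrightarrow> strict_mono u \<and> (\<forall>n. u n dvd u (Suc n))"

definition ratio :: "(nat \<Rightarrow> int) \<Rightarrow> nat \<Rightarrow> int" where
  "ratio u n = (if n = 0 then u 0 else u n div u (n - 1))"

text \<open>Distance to the nearest integer: the norm of the class of x in T = R/Z.\<close>
definition tnorm :: "real \<Rightarrow> real" where
  "tnorm x = \<bar>x - of_int (round x)\<bar>"

text \<open>s_u(T), with elements of T identified with representatives in [0,1).\<close>
definition s_u :: "(nat \<Rightarrow> int) \<Rightarrow> real set" where
  "s_u u = {x. 0 \<le> x \<and> x < 1 \<and> (\<lambda>n. tnorm (of_int (u n) * x)) \<longlonglongrightarrow> 0}"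

definition torsion_part :: "real set \<Rightarrow> real set" where
  "torsion_part S = {x \<in> S. \<exists>m::nat. m > 0 \<and> of_nat m * x \<in> \<int>}"

text \<open>Canonical representation (digits c n for n \<ge> 1; c 0 normalised to 0).\<close>
definition canonical_rep :: "(nat \<Rightarrow> int) \<Rightarrow> real \<Rightarrow> (nat \<Rightarrow> int) \<Rightarrow> bool" where
  "canonical_rep u x c \<longleftrightarrow> c 0 = 0 \<and>
     (\<forall>n\<ge>1. 0 \<le> c n \<and> c n < ratio u n) \<and>
     infinite {n. n \<ge> 1 \<and> c n < ratio u n - 1} \<and>
     (\<lambda>n. of_int (c (Suc n)) / of_int (u (Suc n))) sums x"

definition supp_u :: "(nat \<Rightarrow> int) \<Rightarrow> real \<Rightarrow> nat set" where
  "supp_u u x = {n. n \<ge> 1 \<and> (THE c. canonical_rep u x c) n \<noteq> 0}"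

end

theory Submission
  imports Defs
begin

locale aseq =
  fixes u :: "nat \<Rightarrow> int"
  assumes aseq: "a_sequence u" and u0: "u 0 = 1"
begin

lemma upos_ge: "u n \<ge> int n + 1"
proof (induction n)
  case 0 then show ?case using u0 by simp
next
  case (Suc n)
  have "u n < u (Suc n)" using aseq unfolding a_sequence_def strict_mono_def by simp
  then show ?case using Suc by simp
qed

lemma upos: "u n > 0" using upos_ge[of n] by simp

lemma uq: "u (Suc n) = ratio u (Suc n) * u n"
proof -
  have "u n dvd u (Suc n)" using aseq unfolding a_sequence_def by simp
  then show ?thesis unfolding ratio_def by simp
qed

lemma q2: "ratio u (Suc n) \<ge> 2"
proof -
  have lt: "u n < u (Suc n)" using aseq unfolding a_sequence_def strict_mono_def by simp
  have "ratio u (Suc n) * u n > 1 * u n" using uq[of n] lt by simp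
  then have "ratio u (Suc n) > 1" using upos[of n] by (simp add: mult_less_cancel_right)
  then show ?thesis by simp
qed

lemma udvd: "N \<le> n \<Longrightarrow> u N dvd u n"
proof (induction n rule: dec_induct)
  case base then show ?case by simp
next
  case (step n)
  then show ?case using uq[of n] by (metis dvd_mult)
qed

lemma inv_u_0: "(\<lambda>n. 1 / real_of_int (u n)) \<longlonglongrightarrow> 0"
proof (rule tendsto_sandwich[of "\<lambda>n. 0" _ _ "\<lambda>n. 1 / (real n + 1)"])
  show "\<forall>\<^sub>F n in sequentially. 0 \<le> 1 / real_of_int (u n)" using upos by (simp add: less_imp_le)
  show "\<forall>\<^sub>F n in sequentially. 1 / real_of_int (u n) \<le> 1 / (real n + 1)"
  proof (rule always_eventually, rule allI)
    fix n
    have "real n + 1 \<le> real_of_int (u n)" using upos_ge[of n] by linarith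
    then show "1 / real_of_int (u n) \<le> 1 / (real n + 1)"
      by (intro divide_left_mono) auto
  qed
  show "(\<lambda>n. 0::real) \<longlonglongrightarrow> 0" by simp
  show "(\<lambda>n. 1 / (real n + 1)) \<longlonglongrightarrow> 0"
    using LIMSEQ_inverse_real_of_nat by (simp add: inverse_eq_divide add.commute)
qed

lemma approx_lim:
  assumes "\<And>n. 0 \<le> x - a n" "\<And>n. x - a n \<le> 1 / real_of_int (u n)"
  shows "a \<longlonglongrightarrow> x"
proof (rule tendsto_sandwich[of "\<lambda>n. x - 1 / real_of_int (u n)" _ _ "\<lambda>n. x"])
  show "\<forall>\<^sub>F n in sequentially. x - 1 / real_of_int (u n) \<le> a n" using assms(2) by (simp add: algebra_simps)
  show "\<forall>\<^sub>F n in sequentially. a n \<le> x" using assms(1) by simp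
  show "(\<lambda>n. x - 1 / real_of_int (u n)) \<longlonglongrightarrow> x" using tendsto_diff[OF tendsto_const inv_u_0, of x] by simp
qed simp

primrec P :: "(nat \<Rightarrow> int) \<Rightarrow> nat \<Rightarrow> int" where
  "P c 0 = 0"
| "P c (Suc n) = ratio u (Suc n) * P c n + c (Suc n)"

lemma S_eq: "(\<Sum>k<n. real_of_int (c (Suc k)) / real_of_int (u (Suc k))) = real_of_int (P c n) / real_of_int (u n)"
proof (induction n)
  case 0 then show ?case by simp
next
  case (Suc n)
  have un: "real_of_int (u n) > 0" using upos by simp
  have e: "real_of_int (u (Suc n)) = real_of_int (ratio u (Suc n)) * real_of_int (u n)"
    using uq[of n] by simp
  have qp: "real_of_int (ratio u (Suc n)) > 0" using q2[of n] by simp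
  show ?case using Suc un qp by (simp add: e field_simps)
qed

definition F :: "real \<Rightarrow> nat \<Rightarrow> int" where "F x n = floor (real_of_int (u n) * x)"

definition g :: "real \<Rightarrow> nat \<Rightarrow> int" where
  "g x n = (if n = 0 then 0 else F x n - ratio u n * F x (n - 1))"

lemma F_bounds: "real_of_int (F x n) \<le> real_of_int (u n) * x" "real_of_int (u n) * x < real_of_int (F x n) + 1"
  unfolding F_def by linarith+

lemma F_div: "0 \<le> x - real_of_int (F x n) / real_of_int (u n)" "x - real_of_int (F x n) / real_of_int (u n) < 1 / real_of_int (u n)"
proof -
  have un: "real_of_int (u n) > 0" using upos by simp
  have e: "x - real_of_int (F x n) / real_of_int (u n) = (real_of_int (u n) * x - real_of_int (F x n)) / real_of_int (u n)"
    using un by (simp add: field_simps)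
  show "0 \<le> x - real_of_int (F x n) / real_of_int (u n)" unfolding e using F_bounds(1)[of x n] un
    by simp
  show "x - real_of_int (F x n) / real_of_int (u n) < 1 / real_of_int (u n)" unfolding e
    using F_bounds(2)[of n x] un by (intro divide_strict_right_mono) auto
qed

lemma F_lim: "(\<lambda>n. real_of_int (F x n) / real_of_int (u n)) \<longlonglongrightarrow> x"
  by (rule approx_lim[OF F_div(1) less_imp_le[OF F_div(2)]])

lemma F_rel: "ratio u (Suc n) * F x n \<le> F x (Suc n)" "F x (Suc n) \<le> ratio u (Suc n) * F x n + ratio u (Suc n) - 1"
proof -
  have qp: "real_of_int (ratio u (Suc n)) > 0" using q2[of n] by simp
  have e: "real_of_int (u (Suc n)) * x = real_of_int (ratio u (Suc n)) * (real_of_int (u n) * x)"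
    using uq[of n] by simp
  have a: "real_of_int (ratio u (Suc n) * F x n) \<le> real_of_int (u (Suc n)) * x"
    unfolding e using mult_left_mono[OF F_bounds(1)[of x n] less_imp_le[OF qp]] e by simp
  have b: "real_of_int (u (Suc n)) * x < real_of_int (ratio u (Suc n) * F x n + ratio u (Suc n))"
    unfolding e using mult_strict_left_mono[OF F_bounds(2)[of n x] qp] e by (simp add: algebra_simps)
  show "ratio u (Suc n) * F x n \<le> F x (Suc n)" using a by (simp add: F_def le_floor_iff)
  show "F x (Suc n) \<le> ratio u (Suc n) * F x n + ratio u (Suc n) - 1" using b
    by (simp add: F_def floor_less_iff)
qed

lemma P_g: "0 \<le> x \<Longrightarrow> x < 1 \<Longrightarrow> P (g x) n = F x n"
proof (induction n)
  case 0 then show ?case using u0 by (simp add: F_def floor_eq_iff)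
next
  case (Suc n) then show ?case by (simp add: g_def)
qed

lemma greedy_canonical:
  assumes x: "0 \<le> x" "x < 1"
  shows "canonical_rep u x (g x)"
  unfolding canonical_rep_def
proof (intro conjI allI impI)
  show "g x 0 = 0" by (simp add: g_def)
  fix n :: nat assume "n \<ge> 1"
  then obtain m where m: "n = Suc m" by (cases n) auto
  show "0 \<le> g x n" using F_rel(1)[of m x] unfolding m g_def by simp
  show "g x n < ratio u n" using F_rel(2)[of x m] unfolding m g_def by simp
next
  show "(\<lambda>n. real_of_int (g x (Suc n)) / real_of_int (u (Suc n))) sums x"
    unfolding sums_def using F_lim[of x] by (simp add: S_eq P_g x)
next
  show "infinite {n. n \<ge> 1 \<and> g x n < ratio u n - 1}"
  proof
    assume "finite {n. n \<ge> 1 \<and> g x n < ratio u n - 1}"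
    then obtain N0 where N0': "\<forall>n \<in> {n. n \<ge> 1 \<and> g x n < ratio u n - 1}. n \<le> N0"
      unfolding finite_nat_set_iff_bounded_le by blast
    have N0: "n \<le> N0" if "n \<ge> 1" "g x n < ratio u n - 1" for n using N0' that by blast
    have geq: "F x (Suc m) + 1 = ratio u (Suc m) * (F x m + 1)" if "m \<ge> N0" for m
    proof -
      have "\<not> g x (Suc m) < ratio u (Suc m) - 1" using N0[of "Suc m"] that by linarith
      then show ?thesis using F_rel(2)[of x m] by (simp add: g_def algebra_simps)
    qed
    let ?c = "real_of_int (F x N0 + 1) / real_of_int (u N0)"
    have const: "real_of_int (F x m + 1) / real_of_int (u m) = ?c" if "m \<ge> N0" for m
      using that
    proof (induction m rule: dec_induct)
      case base then show ?case by simp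
    next
      case (step m)
      have qp: "real_of_int (ratio u (Suc m)) > 0" using q2[of m] by simp
      have "real_of_int (F x (Suc m) + 1) / real_of_int (u (Suc m))
          = real_of_int (ratio u (Suc m)) * real_of_int (F x m + 1) / (real_of_int (ratio u (Suc m)) * real_of_int (u m))"
        using geq[OF step(1)] uq[of m] by (simp del: of_int_add)
      also have "\<dots> = real_of_int (F x m + 1) / real_of_int (u m)" using qp by simp
      finally show ?case using step by simp
    qed
    have lim: "(\<lambda>m. real_of_int (F x m + 1) / real_of_int (u m)) \<longlonglongrightarrow> x"
      using tendsto_add[OF F_lim[of x] inv_u_0] by (simp add: add_divide_distrib)
    have "(\<lambda>m. real_of_int (F x (m + N0) + 1) / real_of_int (u (m + N0))) \<longlonglongrightarrow> x"
      by (rule LIMSEQ_ignore_initial_segment[OF lim])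
    moreover have "(\<lambda>m. real_of_int (F x (m + N0) + 1) / real_of_int (u (m + N0))) = (\<lambda>m. ?c)"
      by (rule ext, rule const) simp
    ultimately have "?c = x" by (metis LIMSEQ_const_iff)
    moreover have "x < ?c" using F_div(2)[of x N0] by (simp add: add_divide_distrib algebra_simps)
    ultimately show False by linarith
  qed
qed


lemma tail_bound:
  assumes c: "canonical_rep u x c" and nk: "n < k" and ck: "c k < ratio u k - 1" and mn: "n \<le> m"
  shows "(\<Sum>j<m. real_of_int (c (Suc j)) / real_of_int (u (Suc j))) - (\<Sum>j<n. real_of_int (c (Suc j)) / real_of_int (u (Suc j)))
         + (if k \<le> m then 1 / real_of_int (u k) else 0) \<le> 1 / real_of_int (u n) - 1 / real_of_int (u m)"
  using mn
proof (induction m rule: dec_induct)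
  case base then show ?case using nk by simp
next
  case (step m)
  let ?S = "\<lambda>m. (\<Sum>j<m. real_of_int (c (Suc j)) / real_of_int (u (Suc j)))"
  have dig: "0 \<le> c (Suc m)" "c (Suc m) < ratio u (Suc m)" using c unfolding canonical_rep_def by auto
  define Q where "Q = real_of_int (ratio u (Suc m))"
  define U where "U = real_of_int (u m)"
  define C where "C = real_of_int (c (Suc m))"
  have U: "U > 0" unfolding U_def using upos by simp
  have Q: "Q > 0" unfolding Q_def using q2[of m] by simp
  have us: "real_of_int (u (Suc m)) = Q * U" unfolding Q_def U_def using uq[of m] by simp
  have diff: "1/U - 1/(Q*U) = (Q - 1)/(Q*U)" using U Q by (simp add: field_simps)
  have SS: "?S (Suc m) = ?S m + C / (Q*U)" by (simp add: C_def us)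
  show ?case
  proof (cases "k = Suc m")
    case True
    have "C \<le> Q - 2" using ck True unfolding C_def Q_def by simp
    then have t: "C/(Q*U) \<le> (Q - 2)/(Q*U)" using Q U by (intro divide_right_mono) auto
    have e2: "(Q - 2)/(Q*U) = 1/U - 1/(Q*U) - 1/(Q*U)" using U Q by (simp add: field_simps)
    have ifm: "(if k \<le> m then 1 / real_of_int (u k) else 0) = 0" using True by simp
    have ifs: "(if k \<le> Suc m then 1 / real_of_int (u k) else 0) = 1/(Q*U)" using True us by simp
    have IH: "?S m - ?S n \<le> 1 / real_of_int (u n) - 1/U" using step(3) unfolding ifm U_def by simp
    show ?thesis unfolding ifs SS us using IH t e2 by linarith
  next
    case False
    have "C \<le> Q - 1" using dig unfolding C_def Q_def by simp
    then have t: "C/(Q*U) \<le> (Q - 1)/(Q*U)" using Q U by (intro divide_right_mono) auto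
    have ifeq: "(if k \<le> Suc m then 1 / real_of_int (u k) else 0) = (if k \<le> m then 1 / real_of_int (u k) else 0)"
      using False by auto
    have IH: "?S m - ?S n + (if k \<le> m then 1 / real_of_int (u k) else 0) \<le> 1 / real_of_int (u n) - 1/U"
      using step(3) unfolding U_def by simp
    show ?thesis unfolding ifeq SS us using IH t diff by linarith
  qed
qed

lemma canonical_unique:
  assumes c: "canonical_rep u x c"
  shows "c = g x"
proof -
  let ?S = "\<lambda>m. (\<Sum>j<m. real_of_int (c (Suc j)) / real_of_int (u (Suc j)))"
  have lim: "?S \<longlonglongrightarrow> x" using c unfolding canonical_rep_def sums_def by simp
  have inf: "infinite {n. n \<ge> 1 \<and> c n < ratio u n - 1}" using c unfolding canonical_rep_def by simp
  have PF: "P c n = F x n" for n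
  proof -
    have un: "real_of_int (u n) > 0" using upos by simp
    have lo: "?S n \<le> x"
    proof (rule LIMSEQ_le_const[OF lim], intro exI allI impI)
      fix m assume "n \<le> m"
      then show "?S n \<le> ?S m"
        using c unfolding canonical_rep_def
        by (intro sum_mono2) (auto intro!: divide_nonneg_pos simp: upos)
    qed
    obtain k where k: "k > n" "k \<in> {n. n \<ge> 1 \<and> c n < ratio u n - 1}"
      using inf unfolding infinite_nat_iff_unbounded by blast
    have "x - ?S n + 1 / real_of_int (u k) \<le> 1 / real_of_int (u n) - 0"
    proof (rule LIMSEQ_le[of "\<lambda>m. ?S m - ?S n + 1 / real_of_int (u k)" _ "\<lambda>m. 1 / real_of_int (u n) - 1 / real_of_int (u m)"])
      show "(\<lambda>m. ?S m - ?S n + 1 / real_of_int (u k)) \<longlonglongrightarrow> x - ?S n + 1 / real_of_int (u k)"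
        by (intro tendsto_intros lim)
      show "(\<lambda>m. 1 / real_of_int (u n) - 1 / real_of_int (u m)) \<longlonglongrightarrow> 1 / real_of_int (u n) - 0"
        by (intro tendsto_intros inv_u_0)
      show "\<exists>N. \<forall>m\<ge>N. ?S m - ?S n + 1 / real_of_int (u k) \<le> 1 / real_of_int (u n) - 1 / real_of_int (u m)"
      proof (intro exI allI impI)
        fix m assume "k \<le> m"
        then show "?S m - ?S n + 1 / real_of_int (u k) \<le> 1 / real_of_int (u n) - 1 / real_of_int (u m)"
          using tail_bound[OF c k(1) _, of m] k by auto
      qed
    qed
    moreover have "1 / real_of_int (u k) > 0" using upos by simp
    ultimately have hi: "x < ?S n + 1 / real_of_int (u n)" by linarith
    have Se: "?S n = real_of_int (P c n) / real_of_int (u n)" by (rule S_eq)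
    have a: "real_of_int (P c n) \<le> real_of_int (u n) * x"
      using lo un unfolding Se by (simp add: field_simps)
    have b: "real_of_int (u n) * x < real_of_int (P c n) + 1"
      using hi un unfolding Se by (simp add: field_simps)
    show ?thesis unfolding F_def using a b by (intro floor_unique[symmetric]) auto
  qed
  show ?thesis
  proof
    fix n show "c n = g x n"
    proof (cases n)
      case 0 then show ?thesis using c unfolding canonical_rep_def g_def by simp
    next
      case (Suc m)
      have "c (Suc m) = P c (Suc m) - ratio u (Suc m) * P c m" by simp
      then show ?thesis unfolding Suc g_def by (simp add: PF[symmetric])
    qed
  qed
qed

lemma the_rep: "0 \<le> x \<Longrightarrow> x < 1 \<Longrightarrow> (THE c. canonical_rep u x c) = g x"
  by (metis the_equality greedy_canonical canonical_unique)

end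

lemma (in aseq) int_after:
  assumes "N \<le> n" "real_of_int (u N) * x = real_of_int K"
  shows "real_of_int (u n) * x = real_of_int (F x n)"
proof -
  obtain d where d: "u n = u N * d" using udvd[OF assms(1)] by blast
  have "real_of_int (u n) * x = real_of_int (d * K)" using assms(2) d by (simp add: algebra_simps)
  then show ?thesis unfolding F_def by simp
qed

lemma tnorm_int: "tnorm (real_of_int k) = 0"
  unfolding tnorm_def by simp

theorem mainTheorem7:
  fixes u :: "nat \<Rightarrow> int"
  assumes "a_sequence u" and "u 0 = 1"
  shows "{x::real. 0 \<le> x \<and> x < 1 \<and> finite (supp_u u x)} = torsion_part (s_u u)"
proof -
  interpret aseq u using assms by unfold_locales
  have supp: "supp_u u x = {n. n \<ge> 1 \<and> g x n \<noteq> 0}" if "0 \<le> x" "x < 1" for x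
    unfolding supp_u_def the_rep[OF that] by simp
  show ?thesis
  proof (intro equalityI subsetI)
    fix x assume "x \<in> {x::real. 0 \<le> x \<and> x < 1 \<and> finite (supp_u u x)}"
    then have x: "0 \<le> x" "x < 1" and fin: "finite {n. n \<ge> 1 \<and> g x n \<noteq> 0}" using supp by auto
    then obtain N0 where N0': "\<forall>n \<in> {n. n \<ge> 1 \<and> g x n \<noteq> 0}. n \<le> N0"
      unfolding finite_nat_set_iff_bounded_le by blast
    have g0: "g x (Suc m) = 0" if "m \<ge> N0" for m using N0' that by force
    let ?c = "real_of_int (F x N0) / real_of_int (u N0)"
    have const: "real_of_int (F x m) / real_of_int (u m) = ?c" if "m \<ge> N0" for m
      using that
    proof (induction m rule: dec_induct)
      case base then show ?case by simp
    next
      case (step m)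
      have qp: "real_of_int (ratio u (Suc m)) > 0" using q2[of m] by simp
      have fe: "F x (Suc m) = ratio u (Suc m) * F x m" using g0[OF step(1)] by (simp add: g_def)
      have "real_of_int (F x (Suc m)) / real_of_int (u (Suc m))
          = real_of_int (ratio u (Suc m)) * real_of_int (F x m) / (real_of_int (ratio u (Suc m)) * real_of_int (u m))"
        using fe uq[of m] by simp
      also have "\<dots> = real_of_int (F x m) / real_of_int (u m)" using qp by simp
      finally show ?case using step by simp
    qed
    have "(\<lambda>m. real_of_int (F x (m + N0)) / real_of_int (u (m + N0))) \<longlonglongrightarrow> x"
      by (rule LIMSEQ_ignore_initial_segment[OF F_lim])
    moreover have "(\<lambda>m. real_of_int (F x (m + N0)) / real_of_int (u (m + N0))) = (\<lambda>m. ?c)"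
      by (rule ext, rule const) simp
    ultimately have xc: "?c = x" by (metis LIMSEQ_const_iff)
    have uN: "real_of_int (u N0) > 0" using upos by simp
    have K: "real_of_int (u N0) * x = real_of_int (F x N0)" using xc uN by (simp add: field_simps)
    have ev: "\<forall>\<^sub>F n in sequentially. tnorm (real_of_int (u n) * x) = 0"
      unfolding eventually_sequentially
      using int_after[OF _ K] tnorm_int by metis
    have "x \<in> s_u u" unfolding s_u_def using x tendsto_eventually[OF ev] by simp
    moreover have "of_nat (nat (u N0)) * x \<in> \<int>" using K upos[of N0] by simp
    moreover have "nat (u N0) > 0" using upos[of N0] by simp
    ultimately show "x \<in> torsion_part (s_u u)" unfolding torsion_part_def by blast
  next
    fix x assume "x \<in> torsion_part (s_u u)"
    then obtain m :: nat where m: "m > 0" "of_nat m * x \<in> \<int>" and xs: "x \<in> s_u u"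
      unfolding torsion_part_def by blast
    from xs have x: "0 \<le> x" "x < 1" and lim: "(\<lambda>n. tnorm (real_of_int (u n) * x)) \<longlonglongrightarrow> 0"
      unfolding s_u_def by auto
    have "\<forall>\<^sub>F n in sequentially. tnorm (real_of_int (u n) * x) < 1 / real m"
      by (rule order_tendstoD(2)[OF lim]) (use m in simp)
    then obtain N where N: "tnorm (real_of_int (u N) * x) < 1 / real m"
      unfolding eventually_sequentially by blast
    define R where "R = round (real_of_int (u N) * x)"
    obtain a where a: "of_nat m * x = of_int a" using m(2) Ints_cases by metis
    have md: "real m * (real_of_int (u N) * x - of_int R) = of_int (u N * a - int m * R)"
      using a by (simp add: algebra_simps)
    have "\<bar>real m * (real_of_int (u N) * x - of_int R)\<bar> < 1"
    proof -
      have "real m * \<bar>real_of_int (u N) * x - of_int R\<bar> < 1"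
        using N m unfolding tnorm_def R_def[symmetric] by (simp add: field_simps)
      then show ?thesis by (simp add: abs_mult)
    qed
    then have "\<bar>u N * a - int m * R\<bar> < 1" unfolding md by linarith
    then have "u N * a - int m * R = 0" by simp
    then have "real m * (real_of_int (u N) * x - of_int R) = 0" unfolding md by simp
    then have K: "real_of_int (u N) * x = real_of_int R" using m by simp
    have "g x (Suc n) = 0" if "n \<ge> N" for n
    proof -
      have a1: "real_of_int (u n) * x = real_of_int (F x n)" by (rule int_after[OF that K])
      have a2: "real_of_int (u (Suc n)) * x = real_of_int (F x (Suc n))" by (rule int_after[OF _ K]) (use that in simp)
      have "real_of_int (F x (Suc n)) = real_of_int (ratio u (Suc n)) * real_of_int (F x n)"
        using a1 a2 uq[of n] by (metis mult.assoc of_int_mult)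
      then have "F x (Suc n) = ratio u (Suc n) * F x n" by (metis of_int_eq_iff of_int_mult)
      then show ?thesis by (simp add: g_def)
    qed
    then have "{n. n \<ge> 1 \<and> g x n \<noteq> 0} \<subseteq> {..N}"
      by (auto simp: Suc_le_eq) (metis Suc_pred not_less_eq_eq)
    then have "finite (supp_u u x)" using supp[OF x] finite_subset by auto
    then show "x \<in> {x::real. 0 \<le> x \<and> x < 1 \<and> finite (supp_u u x)}" using x by simp
  qed
qed

end
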